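(* Let $\mathcal F$ be a filtration array and $E=(E_{m,n})_{m,n\in\mathbb N}$ a nonnegative process adapted to $\mathcal F$ having the asymptotic supermartingale property (in $L_1$, for $\mathcal F$, uniformly in $\mathcal P$). If $E$ is asymptotically calibrated, i.e. $\limsup_{m\to\infty}\sup_{P\in\mathcal P}\mathbb E_P[E_{m,0}]\le 1$, then $E$ is an $r$-asymptotic e-process for $\mathcal P$ and $\mathcal F$ for every extended integer sequence $r=(r_m)_{m\in\mathbb N}$ satisfying $$\lim_{m\to\infty}\sup_{P\in\mathcal P}\mathbb E_P\Big[\sum_{n=0}^{r_m-1}\delta_{m,n}^+\Big]=0 .$$
   Context: $(\Omega,\mathcal A)$ is a measurable space, $\mathcal P$ a set of probability measures on it, $\mathbb N=\{0,1,\dots\}$; extended integers are elements of $\mathbb N\cup\{\infty\}$. Nonnegative random variables take values in $[0,\infty]$ with $\mathbb E_P[X]:=\infty$ if not $P$-integrable; $X_\infty:=\limsup_nX_n$. A filtration array is a family $(\mathcal F_{m,n})_{m,n\in\mathbb N}$ of sub-$\sigma$-algebras with $\mathcal F_{m,n}\subset\mathcal F_{m+1,n}\cap\mathcal F_{m,n+1}$; adapted means $E_{m,n}$ is $\mathcal F_{m,n}$-measurable. For $P\in\mathcal P$, $\delta_{m,n}=\mathbb E_P[E_{m,n+1}\mid\mathcal F_{m,n}]-E_{m,n}$ if $E_{m,n+1}$ is $P$-integrable and $\delta_{m,n}=\infty$ otherwise (dependence on $P$ suppressed); $x^+=\max\{x,0\}$. The asymptotic supermartingale property: $\lim_{m}\sup_{P\in\mathcal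 P}\mathbb E_P[\delta_{m,n}^+]=0$ for every $n$. For a filtration $\mathcal G$ and $\rho\in\mathbb N\cup\{\infty\}$, $\mathcal T(\rho,\mathcal G,\mathcal P)$ is the set of $\mathcal G$-stopping times $\tau$ (values in $\mathbb N\cup\{\infty\}$) with $P[\tau\le\rho]=1$ for all $P\in\mathcal P$; $\mathcal T(r,\mathcal F,\mathcal P)$ is the set of sequences $(\tau_m)$ with $\tau_m\in\mathcal T(r_m,\mathcal F_{m,\bullet},\mathcal P)$. $E$ is an $r$-asymptotic e-process if for every $\tau\in\mathcal T(r,\mathcal F,\mathcal P)$, $\limsup_m\sup_{P\in\mathcal P}\mathbb E_P[E_{m,\tau_m}]\le 1$. *)

theory Defs
  imports "HOL-Probability.Probability"
begin

text \<open>The measurable space (Omega, A) is given by a measure M (only space M and sets M matter).\<close>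

definition filtration_array :: "'a measure \<Rightarrow> (nat \<Rightarrow> nat \<Rightarrow> 'a measure) \<Rightarrow> bool" where
  "filtration_array M F \<longleftrightarrow>
     (\<forall>m n. subalgebra M (F m n)) \<and>
     (\<forall>m n. sets (F m n) \<subseteq> sets (F (Suc m) n) \<inter> sets (F m (Suc n)))"

definition adapted_array :: "(nat \<Rightarrow> nat \<Rightarrow> 'a measure) \<Rightarrow> (nat \<Rightarrow> nat \<Rightarrow> 'a \<Rightarrow> ennreal) \<Rightarrow> bool" where
  "adapted_array F E \<longleftrightarrow> (\<forall>m n. E m n \<in> borel_measurable (F m n))"

definition delta :: "'a measure \<Rightarrow> (nat \<Rightarrow> nat \<Rightarrow> 'a measure) \<Rightarrow> (nat \<Rightarrow> nat \<Rightarrow> 'a \<Rightarrow> ennreal)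
    \<Rightarrow> nat \<Rightarrow> nat \<Rightarrow> 'a \<Rightarrow> ereal" where
  "delta P F E m n \<omega> =
     (if (\<integral>\<^sup>+ x. E m (Suc n) x \<partial>P) < \<infinity>
      then enn2ereal (nn_cond_exp P (F m n) (E m (Suc n)) \<omega>) - enn2ereal (E m n \<omega>)
      else \<infinity>)"

definition delta_pos :: "'a measure \<Rightarrow> (nat \<Rightarrow> nat \<Rightarrow> 'a measure) \<Rightarrow> (nat \<Rightarrow> nat \<Rightarrow> 'a \<Rightarrow> ennreal)
    \<Rightarrow> nat \<Rightarrow> nat \<Rightarrow> 'a \<Rightarrow> ennreal" where
  "delta_pos P F E m n \<omega> = e2ennreal (max (delta P F E m n \<omega>) 0)"

definition asymptotic_supermartingale ::
    "'a measure set \<Rightarrow> (nat \<Rightarrow> nat \<Rightarrow> 'a measure) \<Rightarrow> (nat \<Rightarrow> nat \<Rightarrow> 'a \<Rightarrow> ennreal) \<Rightarrow> bool" where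
  "asymptotic_supermartingale Ps F E \<longleftrightarrow>
     (\<forall>n. (\<lambda>m. SUP P\<in>Ps. \<integral>\<^sup>+ \<omega>. delta_pos P F E m n \<omega> \<partial>P) \<longlonglongrightarrow> 0)"

definition ext_stopping_time :: "'a measure \<Rightarrow> (nat \<Rightarrow> 'a measure) \<Rightarrow> ('a \<Rightarrow> enat) \<Rightarrow> bool" where
  "ext_stopping_time M G \<tau> \<longleftrightarrow> (\<forall>n::nat. {\<omega> \<in> space M. \<tau> \<omega> \<le> enat n} \<in> sets (G n))"

definition stopping_times_bounded ::
    "'a measure \<Rightarrow> enat \<Rightarrow> (nat \<Rightarrow> 'a measure) \<Rightarrow> 'a measure set \<Rightarrow> ('a \<Rightarrow> enat) set" where
  "stopping_times_bounded M \<rho> G Ps =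
     {\<tau>. ext_stopping_time M G \<tau> \<and> (\<forall>P\<in>Ps. AE \<omega> in P. \<tau> \<omega> \<le> \<rho>)}"

definition stopped_value :: "(nat \<Rightarrow> nat \<Rightarrow> 'a \<Rightarrow> ennreal) \<Rightarrow> nat \<Rightarrow> ('a \<Rightarrow> enat) \<Rightarrow> 'a \<Rightarrow> ennreal" where
  "stopped_value E m \<tau> \<omega> =
     (case \<tau> \<omega> of enat n \<Rightarrow> E m n \<omega> | \<infinity> \<Rightarrow> limsup (\<lambda>n. E m n \<omega>))"

definition asymptotic_e_process ::
    "'a measure \<Rightarrow> (nat \<Rightarrow> enat) \<Rightarrow> 'a measure set \<Rightarrow> (nat \<Rightarrow> nat \<Rightarrow> 'a measure)
      \<Rightarrow> (nat \<Rightarrow> nat \<Rightarrow> 'a \<Rightarrow> ennreal) \<Rightarrow> bool" where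
  "asymptotic_e_process M r Ps F E \<longleftrightarrow>
     (\<forall>\<tau>::nat \<Rightarrow> 'a \<Rightarrow> enat. (\<forall>m. \<tau> m \<in> stopping_times_bounded M (r m) (F m) Ps) \<longrightarrow>
        limsup (\<lambda>m. SUP P\<in>Ps. \<integral>\<^sup>+ \<omega>. stopped_value E m (\<tau> m) \<omega> \<partial>P) \<le> 1)"

end

theory Submission
  imports Defs
begin

lemma approx_sigma:
  fixes P :: "'a measure" and G :: "nat \<Rightarrow> 'a measure"
  assumes P: "prob_space P"
    and Gsub: "\<And>n. sets (G n) \<subseteq> sets P"
    and Gsp: "\<And>n. space (G n) = space P"
    and Gmono: "\<And>n m. n \<le> m \<Longrightarrow> sets (G n) \<subseteq> sets (G m)"
    and A: "A \<in> sigma_sets (space P) (\<Union>n. sets (G n))"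
  shows "\<forall>\<eta>>0. \<exists>N B. B \<in> sets (G N) \<and> measure P ((A - B) \<union> (B - A)) < \<eta>"
  using A
proof (induction rule: sigma_sets.induct)
  case (Basic a)
  then obtain n where "a \<in> sets (G n)" by auto
  then show ?case by (intro allI impI exI[of _ n] exI[of _ a]) auto
next
  case Empty
  then show ?case by (intro allI impI exI[of _ 0] exI[of _ "{}"]) auto
next
  case (Compl a)
  show ?case
  proof (intro allI impI)
    fix \<eta> :: real assume "\<eta> > 0"
    with Compl.IH obtain N B where B: "B \<in> sets (G N)" "measure P ((a - B) \<union> (B - a)) < \<eta>" by blast
    have "((space P - a) - (space P - B)) \<union> ((space P - B) - (space P - a)) = (a - B) \<union> (B - a)"
    proof -
      have "(\<Union>n. sets (G n)) \<subseteq> Pow (space P)" using sets.space_closed[of "G _"] Gsp by blast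
      hence "a \<subseteq> space P" using sigma_sets_into_sp[OF _ Compl.hyps] by blast
      moreover have "B \<subseteq> space P" using B Gsub[of N] sets.sets_into_space[of B P] by blast
      ultimately show ?thesis by blast
    qed
    moreover have "space P - B \<in> sets (G N)" using B Gsp by (metis sets.compl_sets)
    ultimately show "\<exists>N B. B \<in> sets (G N) \<and> measure P (((space P - a) - B) \<union> (B - (space P - a))) < \<eta>"
      using B by (intro exI[of _ N] exI[of _ "space P - B"]) auto
  qed
next
  case (Union a)
  interpret prob_space P by fact
  have aS[measurable]: "a i \<in> sets P" for i
    using Union.hyps[of i] sets.sigma_sets_subset[of "\<Union>n. sets (G n)" P] Gsub by blast
  show ?case
  proof (intro allI impI)
    fix \<eta> :: real assume eta: "\<eta> > 0"
    have "(\<lambda>I. measure P (\<Union>i<I. a i)) \<longlonglongrightarrow> measure P (\<Union>i. a i)"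
    proof -
      have "(\<lambda>I. measure P (\<Union>i\<in>{..<I}. a i)) \<longlonglongrightarrow> measure P (\<Union>I. \<Union>i\<in>{..<I}. a i)"
        by (rule finite_Lim_measure_incseq) (use aS in \<open>auto simp: incseq_def intro: less_le_trans\<close>)
      moreover have "(\<Union>I. \<Union>i\<in>{..<I}. a i) = (\<Union>i. a i)" by auto
      ultimately show ?thesis by simp
    qed
    then obtain I where I: "measure P (\<Union>i. a i) - measure P (\<Union>i<I. a i) < \<eta>/2"
      using eta by (metis (no_types, lifting) LIMSEQ_le_const2 dual_order.refl half_gt_zero_iff
          LIMSEQ_iff_nz abs_minus_commute abs_less_iff dist_real_def not_less)
    define e where "e = \<eta> / 2 / (real I + 1)"
    have e: "e > 0" using eta by (simp add: e_def)
    have "\<forall>i. \<exists>N B. B \<in> sets (G N) \<and> measure P ((a i - B) \<union> (B - a i)) < e"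
      using Union.IH e by blast
    then obtain Nf Bf where NB: "\<And>i. Bf i \<in> sets (G (Nf i))" "\<And>i. measure P ((a i - Bf i) \<union> (Bf i - a i)) < e"
      by metis
    define N where "N = Max (Nf ` {..<I})"
    define B where "B = (\<Union>i<I. Bf i)"
    have "Bf i \<in> sets (G N)" if "i < I" for i
      using Gmono[of "Nf i" N] NB(1)[of i] that by (auto simp: N_def)
    hence BG: "B \<in> sets (G N)" unfolding B_def by auto
    have BfS[measurable]: "Bf i \<in> sets P" for i using NB(1) Gsub by blast
    have sub: "((\<Union>i. a i) - B) \<union> (B - (\<Union>i. a i)) \<subseteq> ((\<Union>i. a i) - (\<Union>i<I. a i)) \<union> (\<Union>i<I. (a i - Bf i) \<union> (Bf i - a i))"
      unfolding B_def by auto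
    have "measure P (((\<Union>i. a i) - B) \<union> (B - (\<Union>i. a i))) \<le> measure P (((\<Union>i. a i) - (\<Union>i<I. a i)) \<union> (\<Union>i<I. (a i - Bf i) \<union> (Bf i - a i)))"
      by (rule finite_measure_mono[OF sub]) (use aS BfS in measurable)
    also have "\<dots> \<le> measure P ((\<Union>i. a i) - (\<Union>i<I. a i)) + measure P (\<Union>i<I. (a i - Bf i) \<union> (Bf i - a i))"
      by (rule measure_Un_le) measurable
    also have "measure P ((\<Union>i. a i) - (\<Union>i<I. a i)) = measure P (\<Union>i. a i) - measure P (\<Union>i<I. a i)"
      by (rule finite_measure_Diff) (measurable, auto)
    also have "measure P (\<Union>i<I. (a i - Bf i) \<union> (Bf i - a i)) \<le> (\<Sum>i<I. measure P ((a i - Bf i) \<union> (Bf i - a i)))"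
      by (rule finite_measure_subadditive_finite) auto
    also have "\<dots> \<le> (\<Sum>i<I. e)" by (rule sum_mono) (use NB(2) in \<open>auto intro: less_imp_le\<close>)
    also have "\<dots> = real I * e" by simp
    also have "real I * e < \<eta> / 2" using eta by (simp add: e_def field_simps)
    finally show "\<exists>N B. B \<in> sets (G N) \<and> measure P (((\<Union>i. a i) - B) \<union> (B - (\<Union>i. a i))) < \<eta>"
      using I BG by (intro exI[of _ N] exI[of _ B]) auto
  qed
qed

lemma meas_mono_sets:
  assumes "sets A \<subseteq> sets B" "space A = space B" "f \<in> measurable A N"
  shows "f \<in> measurable B N"
  using measurable_from_subalg[of B A f N] assms by (auto simp: subalgebra_def)

lemma stopping_nat_meas:
  fixes \<sigma> :: "'a \<Rightarrow> nat"
  assumes "\<And>n. {\<omega>\<in>space M. \<sigma> \<omega> \<le> n} \<in> sets M"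
  shows "\<sigma> \<in> measurable M (count_space UNIV)"
  unfolding measurable_count_space_eq2_countable
proof (intro conjI ballI)
  fix n
  have "\<sigma> -` {n} \<inter> space M = {\<omega>\<in>space M. \<sigma> \<omega> \<le> n} - (\<Union>j<n. {\<omega>\<in>space M. \<sigma> \<omega> \<le> j})"
    by (auto, meson lessThan_iff linorder_not_le nle_le)
  also have "\<dots> \<in> sets M" using assms by auto
  finally show "\<sigma> -` {n} \<inter> space M \<in> sets M" .
qed auto

lemma stopped_meas:
  fixes \<sigma> :: "'a \<Rightarrow> nat" and X :: "nat \<Rightarrow> 'a \<Rightarrow> ennreal"
  assumes "\<And>n. {\<omega>\<in>space M. \<sigma> \<omega> \<le> n} \<in> sets M" "\<And>n. X n \<in> borel_measurable M"
  shows "(\<lambda>\<omega>. X (\<sigma> \<omega>) \<omega>) \<in> borel_measurable M"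
  by (rule measurable_compose_countable[OF assms(2) stopping_nat_meas[OF assms(1)]])

lemma fatou_stop_simple:
  fixes P :: "'a measure" and G :: "nat \<Rightarrow> 'a measure" and X :: "nat \<Rightarrow> 'a \<Rightarrow> ennreal"
    and g :: "'a \<Rightarrow> ennreal"
  assumes P: "prob_space P"
    and Gsub: "\<And>n. sets (G n) \<subseteq> sets P"
    and Gsp: "\<And>n. space (G n) = space P"
    and Gmono: "\<And>n m. n \<le> m \<Longrightarrow> sets (G n) \<subseteq> sets (G m)"
    and Xm: "\<And>n. X n \<in> borel_measurable (G n)"
    and Hyp: "\<And>\<sigma> K. (\<And>n. {\<omega>\<in>space P. \<sigma> \<omega> \<le> n} \<in> sets (G n)) \<Longrightarrow> (\<And>\<omega>. \<omega> \<in> space P \<Longrightarrow> \<sigma> \<omega> \<le> K)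
              \<Longrightarrow> (\<integral>\<^sup>+\<omega>. X (\<sigma> \<omega>) \<omega> \<partial>P) \<le> S"
    and gm: "g \<in> borel_measurable (sigma (space P) (\<Union>n. sets (G n)))"
    and gfin: "finite (g ` space P)"
    and gtop: "\<And>\<omega>. g \<omega> < top"
    and gle: "\<And>\<omega>. \<omega> \<in> space P \<Longrightarrow> g \<omega> \<le> limsup (\<lambda>n. X n \<omega>)"
  shows "(\<integral>\<^sup>+\<omega>. g \<omega> \<partial>P) \<le> S"
proof (rule ennreal_le_epsilon)
  interpret prob_space P by fact
  fix e :: real assume e: "0 < e"
  define \<epsilon> where "\<epsilon> = e / 2"
  have \<epsilon>: "\<epsilon> > 0" using e by (simp add: \<epsilon>_def)
  define V where "V = g ` space P"
  have Vfin: "finite V" using gfin by (simp add: V_def)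
  define Bm where "Bm = (\<Sum>v\<in>V. enn2real v)"
  have Bm0: "Bm \<ge> 0" by (simp add: Bm_def sum_nonneg)
  have gBm: "g \<omega> \<le> ennreal Bm" if "\<omega> \<in> space P" for \<omega>
  proof -
    have "g \<omega> = ennreal (enn2real (g \<omega>))" using gtop[of \<omega>] by (simp add: less_top)
    also have "enn2real (g \<omega>) \<le> Bm" unfolding Bm_def
      by (rule member_le_sum) (use that in \<open>auto simp: V_def gfin\<close>)
    finally show ?thesis by (simp add: ennreal_leI)
  qed
  define \<eta> where "\<eta> = \<epsilon> / ((Bm + 1) * (real (card V) + 1))"
  have \<eta>: "\<eta> > 0" using \<epsilon> Bm0 by (simp add: \<eta>_def)
  have Gpow: "(\<Union>n. sets (G n)) \<subseteq> Pow (space P)" using sets.space_closed[of "G _"] Gsp by blast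
  have sGinf: "sets (sigma (space P) (\<Union>n. sets (G n))) = sigma_sets (space P) (\<Union>n. sets (G n))"
    using Gpow by (rule sets_measure_of)
  have spGinf: "space (sigma (space P) (\<Union>n. sets (G n))) = space P"
    using Gpow by (rule space_measure_of)
  define A where "A v = g -` {v} \<inter> space P" for v
  have A_sig: "A v \<in> sigma_sets (space P) (\<Union>n. sets (G n))" for v
    using measurable_sets[OF gm, of "{v}"] sGinf spGinf by (simp add: A_def)
  have Gsig: "sigma_sets (space P) (\<Union>n. sets (G n)) \<subseteq> sets P"
    using Gsub by (intro sets.sigma_sets_subset) auto
  have A_sets[measurable]: "A v \<in> sets P" for v using A_sig Gsig by blast
  have "\<forall>v. \<exists>N B. B \<in> sets (G N) \<and> measure P ((A v - B) \<union> (B - A v)) < \<eta>"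
    using approx_sigma[OF P Gsub Gsp Gmono A_sig] \<eta> by blast
  then obtain Nf Bf where NB: "\<And>v. Bf v \<in> sets (G (Nf v))" "\<And>v. measure P ((A v - Bf v) \<union> (Bf v - A v)) < \<eta>"
    by metis
  define N where "N = Max (Nf ` V)"
  have BfN: "Bf v \<in> sets (G N)" if "v \<in> V" for v
    using Gmono[of "Nf v" N] NB(1)[of v] that Vfin by (auto simp: N_def)
  have Bf_sets[measurable]: "Bf v \<in> sets P" for v using NB(1) Gsub by blast
  define h where "h \<omega> = (SUP v\<in>V. v * indicator (Bf v) \<omega>)" for \<omega>
  have hm: "h \<in> borel_measurable (G N)"
    unfolding h_def
    by (rule borel_measurable_SUP) (use Vfin BfN in \<open>auto simp: countable_finite\<close>)
  have hmj: "h \<in> borel_measurable (G j)" if "N \<le> j" for j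
    by (rule meas_mono_sets[OF Gmono[OF that]]) (use Gsp hm in auto)
  define Bad where "Bad = (\<Union>v\<in>V. (A v - Bf v) \<union> (Bf v - A v))"
  have Bad_sets[measurable]: "Bad \<in> sets P" unfolding Bad_def using Vfin
    by (intro sets.finite_UN sets.Un sets.Diff A_sets Bf_sets) auto
  have good: "h \<omega> = g \<omega>" if "\<omega> \<in> space P" "\<omega> \<notin> Bad" for \<omega>
  proof -
    have gV: "g \<omega> \<in> V" using that by (simp add: V_def)
    have eq: "v * indicator (Bf v) \<omega> = (if g \<omega> = v then v else 0)" if "v \<in> V" for v
    proof -
      have "\<omega> \<in> Bf v \<longleftrightarrow> \<omega> \<in> A v" using \<open>\<omega> \<notin> Bad\<close> that unfolding Bad_def by blast
      moreover have "\<omega> \<in> A v \<longleftrightarrow> g \<omega> = v" using \<open>\<omega> \<in> space P\<close> by (simp add: A_def)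
      ultimately show ?thesis by (simp add: indicator_def)
    qed
    have "h \<omega> = (SUP v\<in>V. (if g \<omega> = v then v else 0))"
      unfolding h_def by (rule SUP_cong) (auto simp: eq)
    also have "\<dots> = g \<omega>"
    proof (rule antisym)
      show "(SUP v\<in>V. (if g \<omega> = v then v else 0)) \<le> g \<omega>" by (rule SUP_least) auto
      show "g \<omega> \<le> (SUP v\<in>V. (if g \<omega> = v then v else 0))"
        by (rule SUP_upper2[OF gV]) simp
    qed
    finally show ?thesis .
  qed
  define C where "C n \<omega> \<longleftrightarrow> h \<omega> \<le> X n \<omega> + ennreal \<epsilon>" for n \<omega>
  have C_sets: "{\<omega>\<in>space P. C j \<omega>} \<in> sets (G j)" if "N \<le> j" for j
  proof -
    have [measurable]: "h \<in> borel_measurable (G j)" "X j \<in> borel_measurable (G j)"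
      using hmj[OF that] Xm by auto
    have "{\<omega>\<in>space (G j). h \<omega> \<le> X j \<omega> + ennreal \<epsilon>} \<in> sets (G j)" by measurable
    then show ?thesis using Gsp by (simp add: C_def)
  qed
  define D where "D K = {\<omega>\<in>space P. \<exists>n\<in>{N..N+K}. C n \<omega>}" for K
  define \<sigma> where "\<sigma> K \<omega> = (if \<exists>n\<in>{N..N+K}. C n \<omega> then (LEAST n. N \<le> n \<and> C n \<omega>) else N + K)" for K \<omega>
  have \<sigma>_C': "N \<le> \<sigma> K \<omega> \<and> C (\<sigma> K \<omega>) \<omega>" if "\<exists>n\<in>{N..N+K}. C n \<omega>" for K \<omega>
  proof -
    from that obtain n where "N \<le> n \<and> C n \<omega>" by auto
    then have "N \<le> (LEAST n. N \<le> n \<and> C n \<omega>) \<and> C (LEAST n. N \<le> n \<and> C n \<omega>) \<omega>" by (rule LeastI)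
    with that show ?thesis by (simp add: \<sigma>_def)
  qed
  have \<sigma>_ge: "N \<le> \<sigma> K \<omega>" for K \<omega>
  proof (cases "\<exists>n\<in>{N..N+K}. C n \<omega>")
    case True then show ?thesis using \<sigma>_C' by blast
  qed (simp add: \<sigma>_def)
  have \<sigma>_le: "\<sigma> K \<omega> \<le> N + K" for K \<omega>
  proof (cases "\<exists>n\<in>{N..N+K}. C n \<omega>")
    case True
    then obtain n where "n \<in> {N..N+K}" "C n \<omega>" by blast
    then have "(LEAST n. N \<le> n \<and> C n \<omega>) \<le> n" by (intro Least_le) auto
    with True \<open>n \<in> {N..N+K}\<close> show ?thesis by (simp add: \<sigma>_def)
  qed (simp add: \<sigma>_def)
  have \<sigma>_C: "C (\<sigma> K \<omega>) \<omega>" if "\<exists>n\<in>{N..N+K}. C n \<omega>" for K \<omega>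
    using \<sigma>_C'[OF that] by blast
  have \<sigma>_stop: "{\<omega>\<in>space P. \<sigma> K \<omega> \<le> n} \<in> sets (G n)" for K n
  proof -
    consider "n < N" | "N + K \<le> n" | "N \<le> n" "n < N + K" by linarith
    then show ?thesis
    proof cases
      case 1
      have "\<not> \<sigma> K \<omega> \<le> n" for \<omega> using \<sigma>_ge[of K \<omega>] 1 by linarith
      then have "{\<omega>\<in>space P. \<sigma> K \<omega> \<le> n} = {}" by blast
      then show ?thesis by (metis sets.empty_sets)
    next
      case 2
      have "\<sigma> K \<omega> \<le> n" for \<omega> using \<sigma>_le[of K \<omega>] 2 by linarith
      then have "{\<omega>\<in>space P. \<sigma> K \<omega> \<le> n} = space (G n)" using Gsp by blast
      then show ?thesis by (metis sets.top)
    next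
      case 3
      have "{\<omega>\<in>space P. \<sigma> K \<omega> \<le> n} = (\<Union>j\<in>{N..n}. {\<omega>\<in>space P. C j \<omega>})"
      proof (intro set_eqI iffI)
        fix \<omega> assume "\<omega> \<in> {\<omega>\<in>space P. \<sigma> K \<omega> \<le> n}"
        then have w: "\<omega> \<in> space P" "\<sigma> K \<omega> \<le> n" by auto
        have ex: "\<exists>n\<in>{N..N+K}. C n \<omega>"
        proof (rule ccontr)
          assume "\<not> ?thesis"
          then have "\<sigma> K \<omega> = N + K" by (simp add: \<sigma>_def)
          with w 3 show False by simp
        qed
        show "\<omega> \<in> (\<Union>j\<in>{N..n}. {\<omega>\<in>space P. C j \<omega>})"
          using \<sigma>_C[OF ex] \<sigma>_ge[of K \<omega>] w by auto
      next
        fix \<omega> assume "\<omega> \<in> (\<Union>j\<in>{N..n}. {\<omega>\<in>space P. C j \<omega>})"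
        then obtain j where j: "j \<in> {N..n}" "C j \<omega>" "\<omega> \<in> space P" by auto
        then have ex: "\<exists>n\<in>{N..N+K}. C n \<omega>" using 3 by (intro bexI[of _ j]) auto
        have "(LEAST n. N \<le> n \<and> C n \<omega>) \<le> j" using j by (intro Least_le) auto
        then show "\<omega> \<in> {\<omega>\<in>space P. \<sigma> K \<omega> \<le> n}" using ex j by (simp add: \<sigma>_def)
      qed
      also have "\<dots> \<in> sets (G n)"
        using C_sets Gmono by (intro sets.finite_UN) auto
      finally show ?thesis .
    qed
  qed
  have \<sigma>_stopP: "{\<omega>\<in>space P. \<sigma> K \<omega> \<le> n} \<in> sets P" for K n using \<sigma>_stop Gsub by blast
  have XmP[measurable]: "X n \<in> borel_measurable P" for n
    by (rule meas_mono_sets[OF Gsub]) (use Gsp Xm in auto)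
  have hP[measurable]: "h \<in> borel_measurable P"
    by (rule meas_mono_sets[OF Gsub]) (use Gsp hm in auto)
  have D_sets[measurable]: "D K \<in> sets P" for K
  proof -
    have "D K = (\<Union>j\<in>{N..N+K}. {\<omega>\<in>space P. C j \<omega>})" by (auto simp: D_def)
    also have "\<dots> \<in> sets P" using C_sets Gsub by (intro sets.finite_UN) auto
    finally show ?thesis .
  qed
  have bound_K: "(\<integral>\<^sup>+\<omega>. h \<omega> * indicator (D K) \<omega> \<partial>P) \<le> S + ennreal \<epsilon>" for K
  proof -
    have Xs[measurable]: "(\<lambda>\<omega>. X (\<sigma> K \<omega>) \<omega>) \<in> borel_measurable P"
      by (rule stopped_meas[OF \<sigma>_stopP XmP])
    have "(\<integral>\<^sup>+\<omega>. h \<omega> * indicator (D K) \<omega> \<partial>P) \<le> (\<integral>\<^sup>+\<omega>. X (\<sigma> K \<omega>) \<omega> + ennreal \<epsilon> \<partial>P)"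
    proof (rule nn_integral_mono)
      fix \<omega> assume "\<omega> \<in> space P"
      show "h \<omega> * indicator (D K) \<omega> \<le> X (\<sigma> K \<omega>) \<omega> + ennreal \<epsilon>"
      proof (cases "\<omega> \<in> D K")
        case True
        then have "C (\<sigma> K \<omega>) \<omega>" by (intro \<sigma>_C) (auto simp: D_def)
        with True show ?thesis by (simp add: C_def)
      qed simp
    qed
    also have "\<dots> = (\<integral>\<^sup>+\<omega>. X (\<sigma> K \<omega>) \<omega> \<partial>P) + ennreal \<epsilon>"
      by (subst nn_integral_add) (auto simp: emeasure_space_1)
    also have "\<dots> \<le> S + ennreal \<epsilon>"
      by (intro add_right_mono Hyp[of "\<sigma> K" "N + K"] \<sigma>_stop \<sigma>_le)
    finally show ?thesis .
  qed
  have reach: "\<exists>K. \<omega> \<in> D K" if "\<omega> \<in> space P" "\<omega> \<notin> Bad" for \<omega>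
  proof -
    have hg: "h \<omega> = g \<omega>" using good that by blast
    have "\<exists>n\<ge>N. C n \<omega>"
    proof (cases "h \<omega> \<le> ennreal \<epsilon>")
      case True
      have "ennreal \<epsilon> \<le> X N \<omega> + ennreal \<epsilon>" by simp
      with True have "C N \<omega>" unfolding C_def by (rule order_trans)
      then show ?thesis by blast
    next
      case False
      obtain r where r: "h \<omega> = ennreal r" "r \<ge> 0" using gtop[of \<omega>] hg
        by (metis ennreal_cases less_irrefl top.extremum_strict)
      have r\<epsilon>: "r > \<epsilon>" using False r by (auto simp: ennreal_le_iff2 not_le)
      have "ennreal (r - \<epsilon>) < h \<omega>" using r r\<epsilon> \<epsilon> by (simp add: ennreal_lessI)
      also have "h \<omega> \<le> limsup (\<lambda>n. X n \<omega>)" using hg gle that by simp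
      also have "\<dots> \<le> (SUP n\<in>{N..}. X n \<omega>)" unfolding limsup_INF_SUP by (rule INF_lower) simp
      finally obtain n where n: "n \<ge> N" "ennreal (r - \<epsilon>) < X n \<omega>" by (auto simp: less_SUP_iff)
      have "h \<omega> = ennreal (r - \<epsilon>) + ennreal \<epsilon>" using r r\<epsilon> \<epsilon> by (simp flip: ennreal_plus)
      also have "\<dots> \<le> X n \<omega> + ennreal \<epsilon>" using n by (intro add_right_mono) simp
      finally show ?thesis using n by (auto simp: C_def)
    qed
    then obtain n where "n \<ge> N" "C n \<omega>" by blast
    then show ?thesis using that by (intro exI[of _ "n - N"]) (auto simp: D_def)
  qed
  have part1: "(\<integral>\<^sup>+\<omega>. g \<omega> * indicator (space P - Bad) \<omega> \<partial>P) \<le> S + ennreal \<epsilon>"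
  proof -
    have "(\<integral>\<^sup>+\<omega>. g \<omega> * indicator (space P - Bad) \<omega> \<partial>P) \<le> (\<integral>\<^sup>+\<omega>. (SUP K. h \<omega> * indicator (D K) \<omega>) \<partial>P)"
    proof (rule nn_integral_mono)
      fix \<omega> assume w: "\<omega> \<in> space P"
      show "g \<omega> * indicator (space P - Bad) \<omega> \<le> (SUP K. h \<omega> * indicator (D K) \<omega>)"
      proof (cases "\<omega> \<in> Bad")
        case False
        then obtain K where "\<omega> \<in> D K" using reach w by blast
        then have "h \<omega> * indicator (D K) \<omega> \<le> (SUP K. h \<omega> * indicator (D K) \<omega>)" by (intro SUP_upper) auto
        then show ?thesis using False w good \<open>\<omega> \<in> D K\<close> by simp
      qed simp
    qed
    also have "\<dots> = (SUP K. (\<integral>\<^sup>+\<omega>. h \<omega> * indicator (D K) \<omega> \<partial>P))"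
    proof (rule nn_integral_monotone_convergence_SUP)
      show "incseq (\<lambda>K \<omega>. h \<omega> * indicator (D K) \<omega>)"
        by (auto simp: incseq_def le_fun_def D_def indicator_def intro!: mult_left_mono)
    qed measurable
    also have "\<dots> \<le> S + ennreal \<epsilon>" by (intro SUP_least bound_K)
    finally show ?thesis .
  qed
  have measBad: "measure P Bad \<le> real (card V) * \<eta>"
  proof -
    have "measure P Bad \<le> (\<Sum>v\<in>V. measure P ((A v - Bf v) \<union> (Bf v - A v)))"
      unfolding Bad_def by (rule finite_measure_subadditive_finite) (use Vfin in auto)
    also have "\<dots> \<le> (\<Sum>v\<in>V. \<eta>)" by (intro sum_mono less_imp_le NB(2))
    finally show ?thesis by simp
  qed
  have part2: "(\<integral>\<^sup>+\<omega>. g \<omega> * indicator Bad \<omega> \<partial>P) \<le> ennreal \<epsilon>"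
  proof -
    have "(\<integral>\<^sup>+\<omega>. g \<omega> * indicator Bad \<omega> \<partial>P) \<le> (\<integral>\<^sup>+\<omega>. ennreal Bm * indicator Bad \<omega> \<partial>P)"
      by (intro nn_integral_mono mult_right_mono gBm) auto
    also have "\<dots> = ennreal Bm * emeasure P Bad" by (simp add: nn_integral_cmult_indicator)
    also have "\<dots> = ennreal (Bm * measure P Bad)" by (simp add: emeasure_eq_measure ennreal_mult Bm0)
    also have "Bm * measure P Bad \<le> Bm * (real (card V) * \<eta>)" by (intro mult_left_mono measBad Bm0)
    also have "Bm * (real (card V) * \<eta>) \<le> \<epsilon>"
    proof -
      have "Bm * real (card V) \<le> (Bm + 1) * (real (card V) + 1)" using Bm0 by (simp add: algebra_simps)
      then have "Bm * real (card V) * \<epsilon> \<le> (Bm + 1) * (real (card V) + 1) * \<epsilon>"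
        using \<epsilon> by (intro mult_right_mono) auto
      moreover have pos: "(Bm + 1) * (real (card V) + 1) > 0" using Bm0 by simp
      moreover have "Bm * (real (card V) * \<eta>) = Bm * real (card V) * \<epsilon> / ((Bm + 1) * (real (card V) + 1))"
        by (simp add: \<eta>_def)
      ultimately show ?thesis by (simp add: pos_divide_le_eq mult.commute)
    qed
    finally show ?thesis by (simp add: ennreal_leI)
  qed
  have gm': "g \<in> borel_measurable P"
    by (rule meas_mono_sets[OF _ _ gm]) (use Gsig sGinf spGinf in auto)
  have "(\<integral>\<^sup>+\<omega>. g \<omega> \<partial>P) = (\<integral>\<^sup>+\<omega>. g \<omega> * indicator (space P - Bad) \<omega> + g \<omega> * indicator Bad \<omega> \<partial>P)"
    by (rule nn_integral_cong) (auto simp: indicator_def)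
  also have "\<dots> = (\<integral>\<^sup>+\<omega>. g \<omega> * indicator (space P - Bad) \<omega> \<partial>P) + (\<integral>\<^sup>+\<omega>. g \<omega> * indicator Bad \<omega> \<partial>P)"
    using gm' by (intro nn_integral_add) auto
  also have "\<dots> \<le> (S + ennreal \<epsilon>) + ennreal \<epsilon>" by (intro add_mono part1 part2)
  also have "\<dots> = S + ennreal e" using \<epsilon> by (simp add: \<epsilon>_def add.assoc flip: ennreal_plus)
  finally show "(\<integral>\<^sup>+\<omega>. g \<omega> \<partial>P) \<le> S + ennreal e" .
qed

lemma fatou_stop:
  fixes P :: "'a measure" and G :: "nat \<Rightarrow> 'a measure" and X :: "nat \<Rightarrow> 'a \<Rightarrow> ennreal"
  assumes P: "prob_space P"
    and Gsub: "\<And>n. sets (G n) \<subseteq> sets P"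
    and Gsp: "\<And>n. space (G n) = space P"
    and Gmono: "\<And>n m. n \<le> m \<Longrightarrow> sets (G n) \<subseteq> sets (G m)"
    and Xm: "\<And>n. X n \<in> borel_measurable (G n)"
    and Hyp: "\<And>\<sigma> K. (\<And>n. {\<omega>\<in>space P. \<sigma> \<omega> \<le> n} \<in> sets (G n)) \<Longrightarrow> (\<And>\<omega>. \<omega> \<in> space P \<Longrightarrow> \<sigma> \<omega> \<le> K)
              \<Longrightarrow> (\<integral>\<^sup>+\<omega>. X (\<sigma> \<omega>) \<omega> \<partial>P) \<le> S"
  shows "(\<integral>\<^sup>+\<omega>. limsup (\<lambda>n. X n \<omega>) \<partial>P) \<le> S"
proof -
  define Gi where "Gi = sigma (space P) (\<Union>n. sets (G n))"
  have Gpow: "(\<Union>n. sets (G n)) \<subseteq> Pow (space P)" using sets.space_closed[of "G _"] Gsp by blast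
  have sGi: "sets Gi = sigma_sets (space P) (\<Union>n. sets (G n))"
    unfolding Gi_def using Gpow by (rule sets_measure_of)
  have spGi: "space Gi = space P"
    unfolding Gi_def using Gpow by (rule space_measure_of)
  have Gsig: "sets Gi \<subseteq> sets P"
    unfolding sGi using Gsub by (intro sets.sigma_sets_subset) auto
  have XGi: "X n \<in> borel_measurable Gi" for n
    by (rule meas_mono_sets[OF _ _ Xm]) (auto simp: sGi spGi Gsp)
  have YGi: "(\<lambda>\<omega>. limsup (\<lambda>n. X n \<omega>)) \<in> borel_measurable Gi"
    using XGi by (rule borel_measurable_limsup)
  obtain f where f: "\<And>i. simple_function Gi (f i)" "incseq f" "\<And>i x. f i x < top"
    "\<And>x. (SUP i. f i x) = limsup (\<lambda>n. X n x)"
    using borel_measurable_implies_simple_function_sequence'[OF YGi] by blast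
  have fP: "f i \<in> borel_measurable P" for i
    by (rule meas_mono_sets[OF Gsig _ borel_measurable_simple_function[OF f(1)]]) (simp add: spGi)
  have "(\<integral>\<^sup>+\<omega>. limsup (\<lambda>n. X n \<omega>) \<partial>P) = (\<integral>\<^sup>+\<omega>. (SUP i. f i \<omega>) \<partial>P)" by (simp add: f(4))
  also have "\<dots> = (SUP i. (\<integral>\<^sup>+\<omega>. f i \<omega> \<partial>P))"
    by (rule nn_integral_monotone_convergence_SUP[OF f(2) fP])
  also have "\<dots> \<le> S"
  proof (rule SUP_least)
    fix i
    show "(\<integral>\<^sup>+\<omega>. f i \<omega> \<partial>P) \<le> S"
    proof (rule fatou_stop_simple[OF P Gsub Gsp Gmono Xm Hyp])
      show "f i \<in> borel_measurable (sigma (space P) (\<Union>n. sets (G n)))"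
        using borel_measurable_simple_function[OF f(1)] by (simp add: Gi_def)
      show "finite (f i ` space P)" using simple_functionD(1)[OF f(1)] by (simp add: spGi)
      show "f i \<omega> < top" for \<omega> by (rule f(3))
      show "f i \<omega> \<le> limsup (\<lambda>n. X n \<omega>)" for \<omega>
        by (metis f(4) SUP_upper UNIV_I)
    qed auto
  qed
  finally show ?thesis .
qed

definition stp :: "('a \<Rightarrow> enat) \<Rightarrow> nat \<Rightarrow> 'a \<Rightarrow> nat" where
  "stp \<rho> k \<omega> = (case \<rho> \<omega> of enat j \<Rightarrow> min j k | \<infinity> \<Rightarrow> k)"

lemma stp_le_iff: "stp \<rho> k \<omega> \<le> n \<longleftrightarrow> (k \<le> n \<or> \<rho> \<omega> \<le> enat n)"
  by (cases "\<rho> \<omega>") (auto simp: stp_def)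

lemma stp_Suc: "stp \<rho> (Suc k) \<omega> = (if \<rho> \<omega> \<le> enat k then stp \<rho> k \<omega> else Suc k)"
  by (cases "\<rho> \<omega>") (auto simp: stp_def)

lemma stp_k: "\<not> \<rho> \<omega> \<le> enat k \<Longrightarrow> stp \<rho> k \<omega> = k"
  by (cases "\<rho> \<omega>") (auto simp: stp_def)

lemma opt_stop:
  fixes P :: "'a measure" and G :: "nat \<Rightarrow> 'a measure" and X d :: "nat \<Rightarrow> 'a \<Rightarrow> ennreal"
    and \<rho> :: "'a \<Rightarrow> enat"
  assumes Gsub: "\<And>n. sets (G n) \<subseteq> sets P"
    and Gsp: "\<And>n. space (G n) = space P"
    and Xm: "\<And>n. X n \<in> borel_measurable (G n)"
    and dm: "\<And>n. d n \<in> borel_measurable P"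
    and H: "\<And>k A. A \<in> sets (G k) \<Longrightarrow>
        (\<integral>\<^sup>+\<omega>. indicator A \<omega> * X (Suc k) \<omega> \<partial>P) \<le> (\<integral>\<^sup>+\<omega>. indicator A \<omega> * (X k \<omega> + d k \<omega>) \<partial>P)"
    and \<rho>: "\<And>n. {\<omega>\<in>space P. \<rho> \<omega> \<le> enat n} \<in> sets (G n)"
  shows "(\<integral>\<^sup>+\<omega>. X (stp \<rho> k \<omega>) \<omega> \<partial>P) \<le> (\<integral>\<^sup>+\<omega>. X 0 \<omega> \<partial>P)
           + (\<Sum>n<k. \<integral>\<^sup>+\<omega>. indicator {\<omega>\<in>space P. enat n < \<rho> \<omega>} \<omega> * d n \<omega> \<partial>P)"
proof (induction k)
  case 0
  have "stp \<rho> 0 \<omega> = 0" for \<omega> by (cases "\<rho> \<omega>") (auto simp: stp_def)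
  then show ?case by simp
next
  case (Suc k)
  have XmP[measurable]: "X n \<in> borel_measurable P" for n
    by (rule meas_mono_sets[OF Gsub]) (use Gsp Xm in auto)
  have [measurable]: "d n \<in> borel_measurable P" for n by (rule dm)
  have \<rho>P: "{\<omega>\<in>space P. \<rho> \<omega> \<le> enat n} \<in> sets P" for n using \<rho> Gsub by blast
  have stpm: "{\<omega>\<in>space P. stp \<rho> j \<omega> \<le> n} \<in> sets P" for j n
  proof (cases "j \<le> n")
    case True
    then have "{\<omega>\<in>space P. stp \<rho> j \<omega> \<le> n} = space P" by (auto simp: stp_le_iff)
    then show ?thesis by (metis sets.top)
  next
    case False
    then have "{\<omega>\<in>space P. stp \<rho> j \<omega> \<le> n} = {\<omega>\<in>space P. \<rho> \<omega> \<le> enat n}" by (auto simp: stp_le_iff)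
    then show ?thesis using \<rho>P by simp
  qed
  have Xs[measurable]: "(\<lambda>\<omega>. X (stp \<rho> j \<omega>) \<omega>) \<in> borel_measurable P" for j
    by (rule stopped_meas[OF stpm XmP])
  define A where "A = {\<omega>\<in>space P. enat k < \<rho> \<omega>}"
  have AG: "A \<in> sets (G k)"
  proof -
    have "A = space (G k) - {\<omega>\<in>space P. \<rho> \<omega> \<le> enat k}" using Gsp by (auto simp: A_def not_le)
    then show ?thesis using \<rho>[of k] by auto
  qed
  have A[measurable]: "A \<in> sets P" using AG Gsub by blast
  have e1: "(\<integral>\<^sup>+\<omega>. X (stp \<rho> (Suc k) \<omega>) \<omega> \<partial>P) =
      (\<integral>\<^sup>+\<omega>. indicator (space P - A) \<omega> * X (stp \<rho> k \<omega>) \<omega> + indicator A \<omega> * X (Suc k) \<omega> \<partial>P)"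
    by (rule nn_integral_cong) (auto simp: stp_Suc A_def indicator_def not_less)
  also have "\<dots> = (\<integral>\<^sup>+\<omega>. indicator (space P - A) \<omega> * X (stp \<rho> k \<omega>) \<omega> \<partial>P) + (\<integral>\<^sup>+\<omega>. indicator A \<omega> * X (Suc k) \<omega> \<partial>P)"
    by (rule nn_integral_add) auto
  also have "\<dots> \<le> (\<integral>\<^sup>+\<omega>. indicator (space P - A) \<omega> * X (stp \<rho> k \<omega>) \<omega> \<partial>P) + (\<integral>\<^sup>+\<omega>. indicator A \<omega> * (X k \<omega> + d k \<omega>) \<partial>P)"
    by (intro add_left_mono H AG)
  also have "(\<integral>\<^sup>+\<omega>. indicator A \<omega> * (X k \<omega> + d k \<omega>) \<partial>P) =
      (\<integral>\<^sup>+\<omega>. indicator A \<omega> * X k \<omega> \<partial>P) + (\<integral>\<^sup>+\<omega>. indicator A \<omega> * d k \<omega> \<partial>P)"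
    by (subst nn_integral_add[symmetric]) (auto simp: distrib_left)
  also have "(\<integral>\<^sup>+\<omega>. indicator (space P - A) \<omega> * X (stp \<rho> k \<omega>) \<omega> \<partial>P) + ((\<integral>\<^sup>+\<omega>. indicator A \<omega> * X k \<omega> \<partial>P) + (\<integral>\<^sup>+\<omega>. indicator A \<omega> * d k \<omega> \<partial>P))
     = ((\<integral>\<^sup>+\<omega>. indicator (space P - A) \<omega> * X (stp \<rho> k \<omega>) \<omega> \<partial>P) + (\<integral>\<^sup>+\<omega>. indicator A \<omega> * X k \<omega> \<partial>P)) + (\<integral>\<^sup>+\<omega>. indicator A \<omega> * d k \<omega> \<partial>P)"
    by (simp add: add.assoc)
  also have "(\<integral>\<^sup>+\<omega>. indicator (space P - A) \<omega> * X (stp \<rho> k \<omega>) \<omega> \<partial>P) + (\<integral>\<^sup>+\<omega>. indicator A \<omega> * X k \<omega> \<partial>P)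
      = (\<integral>\<^sup>+\<omega>. indicator (space P - A) \<omega> * X (stp \<rho> k \<omega>) \<omega> + indicator A \<omega> * X k \<omega> \<partial>P)"
    by (rule nn_integral_add[symmetric]) auto
  also have "\<dots> = (\<integral>\<^sup>+\<omega>. X (stp \<rho> k \<omega>) \<omega> \<partial>P)"
    by (rule nn_integral_cong) (auto simp: A_def indicator_def not_less stp_k)
  also have "(\<integral>\<^sup>+\<omega>. X (stp \<rho> k \<omega>) \<omega> \<partial>P) + (\<integral>\<^sup>+\<omega>. indicator A \<omega> * d k \<omega> \<partial>P)
      \<le> ((\<integral>\<^sup>+\<omega>. X 0 \<omega> \<partial>P) + (\<Sum>n<k. \<integral>\<^sup>+\<omega>. indicator {\<omega>\<in>space P. enat n < \<rho> \<omega>} \<omega> * d n \<omega> \<partial>P))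
         + (\<integral>\<^sup>+\<omega>. indicator A \<omega> * d k \<omega> \<partial>P)"
    by (intro add_right_mono Suc.IH)
  finally show ?case by (simp add: A_def add.assoc)
qed

lemma ce_pt: fixes a b :: ennreal shows "a \<le> b + e2ennreal (max (enn2ereal a - enn2ereal b) 0)"
proof (cases "b = top")
  case False
  then obtain y where y: "b = ennreal y" "y \<ge> 0" by (cases b) auto
  show ?thesis
  proof (cases "a = top")
    case True
    then show ?thesis using y by (simp add: e2ennreal_infty)
  next
    case False
    then obtain x where x: "a = ennreal x" "x \<ge> 0" by (cases a) auto
    have "max (enn2ereal a - enn2ereal b) 0 = ereal (max (x - y) 0)" using x y by (auto simp: zero_ereal_def)
    then have "e2ennreal (max (enn2ereal a - enn2ereal b) 0) = ennreal (max (x - y) 0)"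
      by (simp only: e2ennreal_ereal)
    moreover have "ennreal x \<le> ennreal y + ennreal (x - y)"
    proof (cases "x \<le> y")
      case True
      then have "ennreal x \<le> ennreal y" by (rule ennreal_leI)
      then show ?thesis by (rule order_trans) simp
    next
      case False
      then have "ennreal y + ennreal (x - y) = ennreal x" using y by (subst ennreal_plus[symmetric]) auto
      then show ?thesis by simp
    qed
    ultimately show ?thesis using x y by simp
  qed
qed simp

lemma H_main:
  fixes P M :: "'a measure" and F :: "nat \<Rightarrow> nat \<Rightarrow> 'a measure" and E :: "nat \<Rightarrow> nat \<Rightarrow> 'a \<Rightarrow> ennreal"
  assumes P: "prob_space P" "sets P = sets M"
    and filt: "filtration_array M F"
    and adapt: "adapted_array F E"
    and A: "A \<in> sets (F m k)"
  shows "(\<integral>\<^sup>+\<omega>. indicator A \<omega> * E m (Suc k) \<omega> \<partial>P)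
           \<le> (\<integral>\<^sup>+\<omega>. indicator A \<omega> * (E m k \<omega> + delta_pos P F E m k \<omega>) \<partial>P)"
proof -
  interpret prob_space P by (rule P(1))
  have sp: "space P = space M" by (rule sets_eq_imp_space_eq[OF P(2)])
  have subM: "subalgebra M (F m n)" for n using filt by (auto simp: filtration_array_def)
  have subP: "subalgebra P (F m n)" for n using subM[of n] P(2) sp by (auto simp: subalgebra_def)
  have EmF: "E m n \<in> borel_measurable (F m n)" for n using adapt by (auto simp: adapted_array_def)
  have EmP[measurable]: "E m n \<in> borel_measurable P" for n by (rule measurable_from_subalg[OF subP EmF])
  show ?thesis
  proof (cases "(\<integral>\<^sup>+ x. E m (Suc k) x \<partial>P) < \<infinity>")
    case True
    have "finite_measure_subalgebra P (F m k)"
      by (simp add: finite_measure_subalgebra_def finite_measure_subalgebra_axioms_def subP finite_measure_axioms)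
    then interpret sigma_finite_subalgebra P "F m k" by (rule finite_measure_subalgebra_is_sigma_finite)
    have [measurable]: "indicator A \<in> borel_measurable (F m k)" using A by simp
    have "(\<integral>\<^sup>+\<omega>. indicator A \<omega> * E m (Suc k) \<omega> \<partial>P) = (\<integral>\<^sup>+\<omega>. indicator A \<omega> * nn_cond_exp P (F m k) (E m (Suc k)) \<omega> \<partial>P)"
      by (rule nn_cond_exp_intg[symmetric]) auto
    also have "\<dots> \<le> (\<integral>\<^sup>+\<omega>. indicator A \<omega> * (E m k \<omega> + delta_pos P F E m k \<omega>) \<partial>P)"
      by (intro nn_integral_mono mult_left_mono)
         (use True in \<open>auto simp: delta_pos_def delta_def intro: ce_pt\<close>)
    finally show ?thesis .
  next
    case False
    then have "delta_pos P F E m k \<omega> = top" for \<omega> by (simp add: delta_pos_def delta_def)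
    then show ?thesis by (intro nn_integral_mono mult_left_mono) auto
  qed
qed

lemma limsup_add_le1:
  fixes b c :: "nat \<Rightarrow> ennreal"
  assumes b: "limsup b \<le> 1" and c: "c \<longlonglongrightarrow> 0"
  shows "limsup (\<lambda>m. b m + c m) \<le> 1"
  unfolding Limsup_le_iff
proof (intro allI impI)
  fix y :: ennreal assume y: "1 < y"
  obtain z where z: "1 < z" "z < y" using dense[OF y] by blast
  have evb: "eventually (\<lambda>m. b m < z) sequentially" using b z(1) unfolding Limsup_le_iff by blast
  have w: "0 < y - z" using z(2) by (simp add: diff_gt_0_iff_gt_ennreal)
  have evc: "eventually (\<lambda>m. c m < y - z) sequentially" using order_tendstoD(2)[OF c w] .
  show "eventually (\<lambda>m. b m + c m < y) sequentially"
    using evb evc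
  proof eventually_elim
    case (elim m)
    have "b m + c m < z + (y - z)" using elim by (rule add_strict_mono)
    also have "\<dots> = y" using z(2) by (intro add_diff_inverse_ennreal) simp
    finally show ?case .
  qed
qed

lemma bound_P:
  fixes M P :: "'a measure" and Ps :: "'a measure set"
    and F :: "nat \<Rightarrow> nat \<Rightarrow> 'a measure" and E :: "nat \<Rightarrow> nat \<Rightarrow> 'a \<Rightarrow> ennreal"
    and r :: "nat \<Rightarrow> enat" and \<tau> :: "'a \<Rightarrow> enat"
  assumes P: "prob_space P" "sets P = sets M" and PPs: "P \<in> Ps"
    and filt: "filtration_array M F"
    and adapt: "adapted_array F E"
    and \<tau>: "\<tau> \<in> stopping_times_bounded M (r m) (F m) Ps"
  shows "(\<integral>\<^sup>+\<omega>. stopped_value E m \<tau> \<omega> \<partial>P) \<le> (\<integral>\<^sup>+\<omega>. E m 0 \<omega> \<partial>P)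
          + (\<integral>\<^sup>+\<omega>. (\<Sum>n. if enat n < r m then delta_pos P F E m n \<omega> else 0) \<partial>P)"
proof -
  interpret prob_space P by (rule P(1))
  have sp: "space P = space M" by (rule sets_eq_imp_space_eq[OF P(2)])
  have subM: "subalgebra M (F m n)" for n using filt by (auto simp: filtration_array_def)
  have Gsub: "sets (F m n) \<subseteq> sets P" for n using subM[of n] P(2) by (auto simp: subalgebra_def)
  have Gsp: "space (F m n) = space P" for n using subM[of n] sp by (auto simp: subalgebra_def)
  have Gmono: "sets (F m n) \<subseteq> sets (F m n')" if "n \<le> n'" for n n'
    using lift_Suc_mono_le[of "\<lambda>n. sets (F m n)", OF _ that] filt by (auto simp: filtration_array_def)
  have subP: "subalgebra P (F m n)" for n using Gsub Gsp by (auto simp: subalgebra_def)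
  have EmF: "E m n \<in> borel_measurable (F m n)" for n using adapt by (auto simp: adapted_array_def)
  have EmP[measurable]: "E m n \<in> borel_measurable P" for n by (rule measurable_from_subalg[OF subP EmF])
  have \<tau>st: "{\<omega>\<in>space P. \<tau> \<omega> \<le> enat n} \<in> sets (F m n)" for n
    using \<tau> sp by (auto simp: stopping_times_bounded_def ext_stopping_time_def)
  have \<tau>AE: "AE \<omega> in P. \<tau> \<omega> \<le> r m" using \<tau> PPs by (auto simp: stopping_times_bounded_def)
  define X where "X n \<omega> = E m (stp \<tau> n \<omega>) \<omega>" for n \<omega>
  have Xm: "X n \<in> borel_measurable (F m n)" for n
  proof -
    have idx: "(\<lambda>\<omega>. stp \<tau> n \<omega>) \<in> measurable (F m n) (count_space UNIV)"
    proof (rule stopping_nat_meas)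
      fix j
      show "{\<omega> \<in> space (F m n). stp \<tau> n \<omega> \<le> j} \<in> sets (F m n)"
      proof (cases "n \<le> j")
        case True
        then have "{\<omega> \<in> space (F m n). stp \<tau> n \<omega> \<le> j} = space (F m n)" by (auto simp: stp_le_iff)
        then show ?thesis by (metis sets.top)
      next
        case False
        then have "{\<omega> \<in> space (F m n). stp \<tau> n \<omega> \<le> j} = {\<omega>\<in>space P. \<tau> \<omega> \<le> enat j}"
          using Gsp by (auto simp: stp_le_iff)
        then show ?thesis using \<tau>st[of j] Gmono[of j n] False by auto
      qed
    qed
    have "(\<lambda>\<omega>. E m (min (stp \<tau> n \<omega>) n) \<omega>) \<in> borel_measurable (F m n)"
    proof (rule measurable_compose_countable[OF _ idx])
      fix j
      show "E m (min j n) \<in> borel_measurable (F m n)"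
        by (rule meas_mono_sets[OF Gmono[of "min j n" n] _ EmF]) (simp_all add: Gsp)
    qed
    moreover have "min (stp \<tau> n \<omega>) n = stp \<tau> n \<omega>" for \<omega>
      using stp_le_iff[of \<tau> n \<omega> n] by simp
    ultimately show ?thesis unfolding X_def[abs_def] by simp
  qed
  have dm: "delta_pos P F E m n \<in> borel_measurable P" for n
    unfolding delta_pos_def delta_def by measurable
  have H: "(\<integral>\<^sup>+\<omega>. indicator A \<omega> * E m (Suc k) \<omega> \<partial>P) \<le> (\<integral>\<^sup>+\<omega>. indicator A \<omega> * (E m k \<omega> + delta_pos P F E m k \<omega>) \<partial>P)"
    if "A \<in> sets (F m k)" for A k
    by (rule H_main[OF P filt adapt that])
  define S where "S = (\<integral>\<^sup>+\<omega>. E m 0 \<omega> \<partial>P)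
          + (\<integral>\<^sup>+\<omega>. (\<Sum>n. if enat n < r m then delta_pos P F E m n \<omega> else 0) \<partial>P)"
  have Hyp: "(\<integral>\<^sup>+\<omega>. X (\<sigma> \<omega>) \<omega> \<partial>P) \<le> S"
    if \<sigma>st: "\<And>n. {\<omega>\<in>space P. \<sigma> \<omega> \<le> n} \<in> sets (F m n)" and \<sigma>K: "\<And>\<omega>. \<omega> \<in> space P \<Longrightarrow> \<sigma> \<omega> \<le> K"
    for \<sigma> K
  proof -
    define \<rho> where "\<rho> \<omega> = min (\<tau> \<omega>) (enat (\<sigma> \<omega>))" for \<omega>
    have \<rho>st: "{\<omega>\<in>space P. \<rho> \<omega> \<le> enat n} \<in> sets (F m n)" for n
    proof -
      have "{\<omega>\<in>space P. \<rho> \<omega> \<le> enat n} = {\<omega>\<in>space P. \<tau> \<omega> \<le> enat n} \<union> {\<omega>\<in>space P. \<sigma> \<omega> \<le> n}"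
        by (auto simp: \<rho>_def min_le_iff_disj)
      then show ?thesis using \<tau>st[of n] \<sigma>st[of n] by auto
    qed
    have "(\<integral>\<^sup>+\<omega>. X (\<sigma> \<omega>) \<omega> \<partial>P) = (\<integral>\<^sup>+\<omega>. E m (stp \<rho> K \<omega>) \<omega> \<partial>P)"
    proof (rule nn_integral_cong)
      fix \<omega> assume w: "\<omega> \<in> space P"
      have "stp \<tau> (\<sigma> \<omega>) \<omega> = stp \<rho> K \<omega>"
        using \<sigma>K[OF w] by (cases "\<tau> \<omega>") (auto simp: stp_def \<rho>_def)
      then show "X (\<sigma> \<omega>) \<omega> = E m (stp \<rho> K \<omega>) \<omega>" by (simp add: X_def)
    qed
    also have "\<dots> \<le> (\<integral>\<^sup>+\<omega>. E m 0 \<omega> \<partial>P)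
           + (\<Sum>n<K. \<integral>\<^sup>+\<omega>. indicator {\<omega>\<in>space P. enat n < \<rho> \<omega>} \<omega> * delta_pos P F E m n \<omega> \<partial>P)"
      by (rule opt_stop[OF Gsub Gsp EmF dm H \<rho>st])
    also have "(\<Sum>n<K. \<integral>\<^sup>+\<omega>. indicator {\<omega>\<in>space P. enat n < \<rho> \<omega>} \<omega> * delta_pos P F E m n \<omega> \<partial>P)
        \<le> (\<Sum>n<K. \<integral>\<^sup>+\<omega>. (if enat n < r m then delta_pos P F E m n \<omega> else 0) \<partial>P)"
    proof (rule sum_mono, rule nn_integral_mono_AE)
      fix n
      show "AE \<omega> in P. indicator {\<omega>\<in>space P. enat n < \<rho> \<omega>} \<omega> * delta_pos P F E m n \<omega>
              \<le> (if enat n < r m then delta_pos P F E m n \<omega> else 0)"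
        using \<tau>AE
      proof eventually_elim
        case (elim \<omega>)
        show ?case
        proof (cases "\<omega> \<in> {\<omega>\<in>space P. enat n < \<rho> \<omega>}")
          case True
          then have "enat n < r m" using elim by (auto simp: \<rho>_def)
          then show ?thesis using True by simp
        qed simp
      qed
    qed
    also have "\<dots> \<le> (\<Sum>n. \<integral>\<^sup>+\<omega>. (if enat n < r m then delta_pos P F E m n \<omega> else 0) \<partial>P)"
      by (rule sum_le_suminf) auto
    also have "\<dots> = (\<integral>\<^sup>+\<omega>. (\<Sum>n. if enat n < r m then delta_pos P F E m n \<omega> else 0) \<partial>P)"
      by (rule nn_integral_suminf[symmetric]) (use dm in auto)
    finally show ?thesis by (simp add: S_def add_left_mono)
  qed
  have lim: "(\<integral>\<^sup>+\<omega>. limsup (\<lambda>n. X n \<omega>) \<partial>P) \<le> S"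
    by (rule fatou_stop[OF P(1) Gsub Gsp Gmono Xm Hyp]) auto
  have "(\<integral>\<^sup>+\<omega>. stopped_value E m \<tau> \<omega> \<partial>P) = (\<integral>\<^sup>+\<omega>. limsup (\<lambda>n. X n \<omega>) \<partial>P)"
  proof (rule nn_integral_cong)
    fix \<omega>
    show "stopped_value E m \<tau> \<omega> = limsup (\<lambda>n. X n \<omega>)"
    proof (cases "\<tau> \<omega>")
      case (enat j)
      have ev: "eventually (\<lambda>n. X n \<omega> = E m j \<omega>) sequentially"
        using eventually_ge_at_top[of j] by eventually_elim (simp add: X_def stp_def enat)
      have "limsup (\<lambda>n. X n \<omega>) = E m j \<omega>"
        by (rule lim_imp_Limsup[OF trivial_limit_sequentially tendsto_eventually[OF ev]])
      then show ?thesis by (simp add: stopped_value_def enat)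
    next
      case infinity
      then show ?thesis by (simp add: stopped_value_def X_def stp_def)
    qed
  qed
  with lim show ?thesis by (simp add: S_def)
qed


theorem mainTheorem7:
  fixes M :: "'a measure" and Ps :: "'a measure set"
    and F :: "nat \<Rightarrow> nat \<Rightarrow> 'a measure" and E :: "nat \<Rightarrow> nat \<Rightarrow> 'a \<Rightarrow> ennreal"
    and r :: "nat \<Rightarrow> enat"
  assumes Ps: "\<forall>P\<in>Ps. prob_space P \<and> sets P = sets M"
    and filt: "filtration_array M F"
    and adapt: "adapted_array F E"
    and supermart: "asymptotic_supermartingale Ps F E"
    and calib: "limsup (\<lambda>m. SUP P\<in>Ps. \<integral>\<^sup>+ \<omega>. E m 0 \<omega> \<partial>P) \<le> 1"
    and r_cond: "(\<lambda>m. SUP P\<in>Ps. \<integral>\<^sup>+ \<omega>. (\<Sum>n. if enat n < r m then delta_pos P F E m n \<omega> else 0) \<partial>P)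
                   \<longlonglongrightarrow> 0"
  shows "asymptotic_e_process M r Ps F E"
  unfolding asymptotic_e_process_def
proof (intro allI impI)
  fix \<tau> :: "nat \<Rightarrow> 'a \<Rightarrow> enat"
  assume \<tau>: "\<forall>m. \<tau> m \<in> stopping_times_bounded M (r m) (F m) Ps"
  define b where "b m = (SUP P\<in>Ps. \<integral>\<^sup>+ \<omega>. E m 0 \<omega> \<partial>P)" for m
  define c where "c m = (SUP P\<in>Ps. \<integral>\<^sup>+ \<omega>. (\<Sum>n. if enat n < r m then delta_pos P F E m n \<omega> else 0) \<partial>P)" for m
  have le: "(SUP P\<in>Ps. \<integral>\<^sup>+ \<omega>. stopped_value E m (\<tau> m) \<omega> \<partial>P) \<le> b m + c m" for m
  proof (rule SUP_least)
    fix P assume PPs: "P \<in> Ps"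
    have "(\<integral>\<^sup>+\<omega>. stopped_value E m (\<tau> m) \<omega> \<partial>P) \<le> (\<integral>\<^sup>+\<omega>. E m 0 \<omega> \<partial>P)
          + (\<integral>\<^sup>+\<omega>. (\<Sum>n. if enat n < r m then delta_pos P F E m n \<omega> else 0) \<partial>P)"
      using Ps PPs \<tau> by (intro bound_P[OF _ _ PPs filt adapt]) auto
    also have "\<dots> \<le> b m + c m"
      unfolding b_def c_def using PPs by (intro add_mono SUP_upper)
    finally show "(\<integral>\<^sup>+\<omega>. stopped_value E m (\<tau> m) \<omega> \<partial>P) \<le> b m + c m" .
  qed
  have "limsup (\<lambda>m. SUP P\<in>Ps. \<integral>\<^sup>+ \<omega>. stopped_value E m (\<tau> m) \<omega> \<partial>P) \<le> limsup (\<lambda>m. b m + c m)"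
    by (rule Limsup_mono) (use le in auto)
  also have "\<dots> \<le> 1"
    by (rule limsup_add_le1) (use calib r_cond in \<open>simp_all add: b_def c_def\<close>)
  finally show "limsup (\<lambda>m. SUP P\<in>Ps. \<integral>\<^sup>+ \<omega>. stopped_value E m (\<tau> m) \<omega> \<partial>P) \<le> 1" .
qed


end
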